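(* Let $(X,d)$ be a $\delta$-hyperbolic space and $\gamma$ a hyperbolic isometry of $X$ with $\ell(\gamma)>3\delta$. Then (i) every point $x\in M_{\min}(\gamma)$ satisfies $d(x,M(\gamma))\le\frac72\delta$; (ii) every point $x\in M(\gamma)$ satisfies $d(x,M_{\min}(\gamma))\le\frac{15}{2}\delta$.
   Context: A metric space is $\delta$-hyperbolic if it is proper, geodesic, and every geodesic triangle is $\delta$-thin (any two points of the triangle identified by the canonical tripod approximation of the triangle, which is isometric on each side, are at distance $\le\delta$). An isometry $\gamma$ is hyperbolic if $k\mapsto\gamma^kx$ is a quasi-isometric embedding $\mathbf Z\to X$; its extension to the ideal (Gromov) boundary $\partial X$ then has exactly two fixed points $\gamma^+=\lim_{p\to+\infty}\gamma^px$ and $\gamma^-=\lim_{p\to+\infty}\gamma^{-p}x$. $\ell(\gamma)=\lim_{k\to\infty}\frac1kd(x,\gamma^kx)$ is the asymptotic displacement and $s(\gamma)=\inf_{x\in X}d(x,\gamma x)$ the minimal displacement. $M(\gamma)$ is the union of all geodesic lines $c$ with $c(-\infty)=\gamma^-$ and $c(+\infty)=\gamma^+$, and $M_{\min}(\gamma)$ is the (nonempty, closed) set of points $x$ where $x\mapsto d(x,\gamma x)$ attains its infimum $s(\gamma)$. *)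

theory Defs
  imports "HOL-Analysis.Analysis"
begin

definition gprod :: "'a::metric_space \<Rightarrow> 'a \<Rightarrow> 'a \<Rightarrow> real" where
  "gprod w y z = (dist w y + dist w z - dist y z) / 2"

definition geod_seg :: "(real \<Rightarrow> 'a::metric_space) \<Rightarrow> 'a \<Rightarrow> 'a \<Rightarrow> bool" where
  "geod_seg c x y \<longleftrightarrow> c 0 = x \<and> c (dist x y) = y \<and>
     (\<forall>s\<in>{0..dist x y}. \<forall>t\<in>{0..dist x y}. dist (c s) (c t) = \<bar>s - t\<bar>)"

definition geod_line :: "(real \<Rightarrow> 'a::metric_space) \<Rightarrow> bool" where
  "geod_line c \<longleftrightarrow> (\<forall>s t. dist (c s) (c t) = \<bar>s - t\<bar>)"

definition proper_space :: "'a::metric_space itself \<Rightarrow> bool" where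
  "proper_space _ \<longleftrightarrow> (\<forall>(x::'a) r. compact (cball x r))"

definition geodesic_space :: "'a::metric_space itself \<Rightarrow> bool" where
  "geodesic_space _ \<longleftrightarrow> (\<forall>x y::'a. \<exists>c. geod_seg c x y)"

text \<open>Every geodesic triangle is delta-thin: in the tripod approximation of a triangle
  with vertices x, y, z, the point at distance t from x on the side [x,y] is identified
  with the point at distance t from x on the side [x,z], for 0 <= t <= (y|z)_x.
  Quantifying over all vertices x and all pairs of sides issuing from x (sides from the
  other vertices are obtained by reversing parametrizations) gives exactly the tripod
  condition for all triangles.\<close>
definition thin_triangles :: "'a::metric_space itself \<Rightarrow> real \<Rightarrow> bool" where
  "thin_triangles _ \<delta> \<longleftrightarrow> (\<forall>(x::'a) y z p q. geod_seg p x y \<longrightarrow> geod_seg q x z \<longrightarrow>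
      (\<forall>t. 0 \<le> t \<and> t \<le> gprod x y z \<longrightarrow> dist (p t) (q t) \<le> \<delta>))"

definition delta_hyperbolic :: "'a::metric_space itself \<Rightarrow> real \<Rightarrow> bool" where
  "delta_hyperbolic T \<delta> \<longleftrightarrow> proper_space T \<and> geodesic_space T \<and> thin_triangles T \<delta>"

definition isometry :: "('a::metric_space \<Rightarrow> 'a) \<Rightarrow> bool" where
  "isometry g \<longleftrightarrow> bij g \<and> (\<forall>x y. dist (g x) (g y) = dist x y)"

definition ipow :: "('a \<Rightarrow> 'a) \<Rightarrow> int \<Rightarrow> 'a \<Rightarrow> 'a" where
  "ipow g k = (if 0 \<le> k then g ^^ nat k else inv g ^^ nat (- k))"

definition hyperbolic_isometry :: "('a::metric_space \<Rightarrow> 'a) \<Rightarrow> bool" where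
  "hyperbolic_isometry g \<longleftrightarrow> isometry g \<and>
     (\<exists>x lam C. lam \<ge> 1 \<and> C \<ge> 0 \<and> (\<forall>m n::int.
        \<bar>real_of_int (m - n)\<bar> / lam - C \<le> dist (ipow g m x) (ipow g n x) \<and>
        dist (ipow g m x) (ipow g n x) \<le> lam * \<bar>real_of_int (m - n)\<bar> + C))"

text \<open>Two families f (along filter F) and h (along filter G) converge to the same point
  of the Gromov (sequential) boundary: their mutual Gromov products tend to infinity.\<close>
definition same_ideal_limit ::
  "('b \<Rightarrow> 'a::metric_space) \<Rightarrow> 'b filter \<Rightarrow> ('c \<Rightarrow> 'a) \<Rightarrow> 'c filter \<Rightarrow> bool" where
  "same_ideal_limit f F h G \<longleftrightarrow>
     (\<forall>w R. eventually (\<lambda>(s, t). R \<le> gprod w (f s) (h t)) (F \<times>\<^sub>F G))"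

definition asymp_disp :: "('a::metric_space \<Rightarrow> 'a) \<Rightarrow> real" where
  "asymp_disp g = (THE L. \<forall>x. (\<lambda>k. dist x ((g ^^ k) x) / real k) \<longlonglongrightarrow> L)"

definition min_disp :: "('a::metric_space \<Rightarrow> 'a) \<Rightarrow> real" where
  "min_disp g = (INF x. dist x (g x))"

definition Mmin :: "('a::metric_space \<Rightarrow> 'a) \<Rightarrow> 'a set" where
  "Mmin g = {x. dist x (g x) = min_disp g}"

text \<open>M(g): union of all geodesic lines c with c(-\<infinity>) = g^- and c(+\<infinity>) = g^+,
  where g^+ = lim_{p\<rightarrow>\<infinity>} g^p x and g^- = lim_{p\<rightarrow>\<infinity>} g^{-p} x.\<close>
definition Mset :: "('a::metric_space \<Rightarrow> 'a) \<Rightarrow> 'a set" where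
  "Mset g = \<Union> {range c | c. geod_line c \<and>
      (\<forall>x. same_ideal_limit c at_top (\<lambda>p. ipow g (int p) x) sequentially) \<and>
      (\<forall>x. same_ideal_limit c at_bot (\<lambda>p. ipow g (- int p) x) sequentially)}"

end

theory Submission
  imports Defs "HOL-Library.Diagonal_Subsequence"
begin


section \<open>Gromov product basics\<close>

lemma gprod_sym: "gprod w y z = gprod w z y"
  by (simp add: gprod_def dist_commute add.commute)

lemma gprod_nonneg: "0 \<le> gprod w y z"
  using dist_triangle[of y z w] by (simp add: gprod_def dist_commute)

lemma gprod_le1: "gprod w y z \<le> dist w y"
  using dist_triangle[of w z y] by (simp add: gprod_def dist_commute)

lemma gprod_le2: "gprod w y z \<le> dist w z"
  using dist_triangle[of w y z] by (simp add: gprod_def dist_commute)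

lemma gprod_swap: "gprod w y z + gprod y w z = dist w y"
  by (simp add: gprod_def dist_commute field_simps)

lemma gprod_lip2: "gprod w y z \<le> gprod w y' z + dist y y'"
proof -
  have "dist w y \<le> dist w y' + dist y y'" by (metis dist_commute dist_triangle)
  moreover have "dist y' z \<le> dist y y' + dist y z" by (metis dist_commute dist_triangle)
  ultimately show ?thesis unfolding gprod_def by (simp add: field_simps)
qed

lemma gprod_lip3: "gprod w y z \<le> gprod w y z' + dist z z'"
  using gprod_lip2[of w z y z'] by (simp add: gprod_sym)

lemma gprod_lip1: "gprod w y z \<le> gprod w' y z + dist w w'"
proof -
  have "dist w y \<le> dist w w' + dist w' y" by (metis dist_triangle)
  moreover have "dist w z \<le> dist w w' + dist w' z" by (metis dist_triangle)
  ultimately show ?thesis unfolding gprod_def by (simp add: field_simps)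
qed

lemma gprod_iso:
  assumes "\<And>a b. dist (g a) (g b) = dist a b"
  shows "gprod (g w) (g y) (g z) = gprod w y z"
  by (simp add: gprod_def assms)

section \<open>Geodesic segments\<close>

lemma geod_seg_dist1:
  assumes "geod_seg c x y" "0 \<le> t" "t \<le> dist x y"
  shows "dist x (c t) = t"
proof -
  have A: "\<forall>s\<in>{0..dist x y}. \<forall>t\<in>{0..dist x y}. dist (c s) (c t) = \<bar>s - t\<bar>" and B: "c 0 = x"
    using assms(1) by (simp_all add: geod_seg_def)
  have "dist (c 0) (c t) = \<bar>0 - t\<bar>" using A assms(2,3) by auto
  thus ?thesis using B assms(2) by auto
qed

lemma geod_seg_dist2:
  assumes "geod_seg c x y" "0 \<le> t" "t \<le> dist x y"
  shows "dist (c t) y = dist x y - t"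
proof -
  have A: "\<forall>s\<in>{0..dist x y}. \<forall>t\<in>{0..dist x y}. dist (c s) (c t) = \<bar>s - t\<bar>" and B: "c (dist x y) = y"
    using assms(1) by (simp_all add: geod_seg_def)
  have "dist (c t) (c (dist x y)) = \<bar>t - dist x y\<bar>" using A assms(2,3) by auto
  thus ?thesis using B assms(3) by auto
qed

lemma geod_seg_dist:
  assumes "geod_seg c x y" "0 \<le> s" "s \<le> dist x y" "0 \<le> t" "t \<le> dist x y"
  shows "dist (c s) (c t) = \<bar>s - t\<bar>"
  using assms unfolding geod_seg_def by auto

lemma geod_seg_rev:
  assumes "geod_seg c x y"
  shows "geod_seg (\<lambda>v. c (dist x y - v)) y x"
  using assms unfolding geod_seg_def by (auto simp: dist_commute)

lemma geod_seg_iso: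
  assumes "geod_seg c x y" "\<And>a b. dist (g a) (g b) = dist a b"
  shows "geod_seg (g \<circ> c) (g x) (g y)"
  using assms unfolding geod_seg_def by auto

lemma geod_line_seg:
  assumes "geod_line c" "a \<le> b"
  shows "geod_seg (\<lambda>v. c (a + v)) (c a) (c b)"
  using assms unfolding geod_seg_def geod_line_def by auto

section \<open>Hyperbolicity consequences\<close>

context
  fixes \<delta> :: real
  assumes hyp: "delta_hyperbolic TYPE('a::metric_space) \<delta>"
begin

lemma thin:
  fixes x y z :: 'a
  assumes "geod_seg p x y" "geod_seg q x z" "0 \<le> t" "t \<le> gprod x y z"
  shows "dist (p t) (q t) \<le> \<delta>"
  using hyp assms unfolding delta_hyperbolic_def thin_triangles_def by blast

lemma geod_exists: "\<exists>c. geod_seg c (x::'a) y"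
  using hyp unfolding delta_hyperbolic_def geodesic_space_def by blast

lemma proper: "compact (cball (x::'a) r)"
  using hyp unfolding delta_hyperbolic_def proper_space_def by blast

lemma delta_nonneg: "0 \<le> \<delta>"
proof -
  obtain x :: 'a where True by simp
  have g: "geod_seg (\<lambda>_. x) x x" unfolding geod_seg_def by auto
  have "dist ((\<lambda>_. x) 0) ((\<lambda>_. x) (0::real)) \<le> \<delta>"
    using thin[OF g g, of 0] by (simp add: gprod_def)
  thus ?thesis by simp
qed

lemma four_point:
  fixes w x y z :: 'a
  shows "gprod w x z \<ge> min (gprod w x y) (gprod w y z) - \<delta>"
proof -
  obtain p where p: "geod_seg p w x" using geod_exists by blast
  obtain q where q: "geod_seg q w y" using geod_exists by blast
  obtain r where r: "geod_seg r w z" using geod_exists by blast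
  define t where "t = min (gprod w x y) (gprod w y z)"
  have t0: "0 \<le> t" using gprod_nonneg t_def by auto
  have t1: "t \<le> dist w x" using gprod_le1[of w x y] t_def by auto
  have t3: "t \<le> dist w z" using gprod_le2[of w y z] t_def by auto
  have "dist (p t) (q t) \<le> \<delta>" using thin[OF p q t0] t_def by auto
  moreover have "dist (q t) (r t) \<le> \<delta>" using thin[OF q r t0] t_def by auto
  moreover have "dist x (p t) = dist w x - t" using geod_seg_dist2[OF p t0 t1] by (simp add: dist_commute)
  moreover have "dist (r t) z = dist w z - t" using geod_seg_dist2[OF r t0 t3] .
  moreover have "dist x z \<le> dist x (p t) + dist (p t) (q t) + dist (q t) (r t) + dist (r t) z"
    by (metis add.commute add_le_cancel_left dist_triangle order.trans add.assoc)
  ultimately have "dist x z \<le> dist w x + dist w z - 2*t + 2*\<delta>" by linarith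
  hence "gprod w x z \<ge> t - \<delta>" unfolding gprod_def by (simp add: field_simps)
  thus ?thesis using t_def by simp
qed

lemma dist_side:
  fixes x y z :: 'a
  assumes p: "geod_seg p y z"
  shows "dist x (p (gprod y x z)) \<le> gprod x y z + \<delta>"
proof -
  obtain q where q: "geod_seg q y x" using geod_exists by blast
  define t where "t = gprod y x z"
  have t0: "0 \<le> t" using gprod_nonneg t_def by auto
  have t1: "t \<le> dist y z" using gprod_le2 t_def by auto
  have t2: "t \<le> dist y x" using gprod_le1 t_def by auto
  have "t \<le> gprod y z x" using t_def gprod_sym[of y x z] by simp
  hence "dist (p t) (q t) \<le> \<delta>" using thin[OF p q t0] by simp
  moreover have "dist (q t) x = dist y x - t" using geod_seg_dist2[OF q t0 t2] .
  moreover have "dist y x - t = gprod x y z" unfolding t_def gprod_def by (simp add: dist_commute field_simps)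
  moreover have "dist x (p t) \<le> dist (p t) (q t) + dist (q t) x"
    by (metis dist_commute dist_triangle)
  ultimately show ?thesis using t_def by auto
qed

lemma tripod_point:
  fixes y z w :: 'a
  assumes p: "geod_seg p y z" and u: "0 \<le> u" "u \<le> dist y z"
  shows "dist (p u) w \<le> max (dist y w) (dist z w) + \<delta>"
proof (cases "u \<le> gprod y z w")
  case True
  obtain q where q: "geod_seg q y w" using geod_exists by blast
  have uw: "u \<le> dist y w" using True gprod_le2[of y z w] by auto
  have "dist (p u) (q u) \<le> \<delta>" using thin[OF p q u(1) True] .
  moreover have "dist (q u) w = dist y w - u" using geod_seg_dist2[OF q u(1) uw] .
  moreover have "dist (p u) w \<le> dist (p u) (q u) + dist (q u) w" by (rule dist_triangle)
  ultimately show ?thesis using u by auto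
next
  case False
  define v where "v = dist y z - u"
  have p': "geod_seg (\<lambda>v. p (dist y z - v)) z y" using geod_seg_rev[OF p] .
  obtain q where q: "geod_seg q z w" using geod_exists by blast
  have sw: "gprod y z w + gprod z y w = dist y z" using gprod_swap[of y z w] .
  have v0: "0 \<le> v" "v \<le> gprod z y w" using False u sw v_def by auto
  have vw: "v \<le> dist z w" using v0 gprod_le2[of z y w] by auto
  have "dist ((\<lambda>v. p (dist y z - v)) v) (q v) \<le> \<delta>" using thin[OF p' q v0] .
  hence "dist (p u) (q v) \<le> \<delta>" using v_def by simp
  moreover have "dist (q v) w = dist z w - v" using geod_seg_dist2[OF q v0(1) vw] .
  moreover have "dist (p u) w \<le> dist (p u) (q v) + dist (q v) w" by (rule dist_triangle)
  ultimately show ?thesis using v0 by auto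
qed

end

section \<open>Isometries and integer powers\<close>

lemma isom_dist: "isometry g \<Longrightarrow> dist (g a) (g b) = dist a b"
  unfolding isometry_def by auto

lemma isom_bij: "isometry g \<Longrightarrow> bij g"
  unfolding isometry_def by auto

lemma isom_inv1: "isometry g \<Longrightarrow> g (inv g a) = a"
  by (simp add: bij_is_surj isom_bij surj_f_inv_f)

lemma isom_inv2: "isometry g \<Longrightarrow> inv g (g a) = a"
  by (simp add: bij_is_inj isom_bij)

lemma isom_inv_dist: "isometry g \<Longrightarrow> dist (inv g a) (inv g b) = dist a b"
  by (metis isom_dist isom_inv1)

lemma ipow_0[simp]: "ipow g 0 a = a"
  by (simp add: ipow_def)

lemma ipow_succ:
  assumes "isometry g"
  shows "ipow g (k+1) a = g (ipow g k a)"
proof (cases "0 \<le> k")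
  case True
  hence "nat (k+1) = Suc (nat k)" by auto
  thus ?thesis using True by (simp add: ipow_def)
next
  case False
  show ?thesis
  proof (cases "k = -1")
    case True thus ?thesis using isom_inv1[OF assms] by (simp add: ipow_def)
  next
    case False2: False
    hence k1: "\<not> 0 \<le> k + 1" using False by auto
    have "nat (-k) = Suc (nat (- (k+1)))" using False False2 by auto
    hence "ipow g k a = inv g ((inv g ^^ nat (- (k+1))) a)" using False by (simp add: ipow_def)
    thus ?thesis using k1 isom_inv1[OF assms] by (simp add: ipow_def)
  qed
qed

lemma ipow_pred:
  assumes "isometry g"
  shows "ipow g (k - 1) a = inv g (ipow g k a)"
  using ipow_succ[OF assms, of "k-1" a] isom_inv2[OF assms] by simp

lemma ipow_add:
  assumes "isometry g"
  shows "ipow g (m + n) a = ipow g m (ipow g n a)"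
proof (induction m rule: int_induct[where k=0])
  case base thus ?case by simp
next
  case (step1 i)
  have "ipow g (i + 1 + n) a = ipow g ((i + n) + 1) a" by (simp add: algebra_simps)
  also have "\<dots> = g (ipow g (i+n) a)" by (rule ipow_succ[OF assms])
  finally show ?case using step1 ipow_succ[OF assms] by simp
next
  case (step2 i)
  have "ipow g (i - 1 + n) a = ipow g ((i + n) - 1) a" by (simp add: algebra_simps)
  also have "\<dots> = inv g (ipow g (i+n) a)" by (rule ipow_pred[OF assms])
  finally show ?case using step2 ipow_pred[OF assms] by simp
qed

lemma ipow_1: "isometry g \<Longrightarrow> ipow g 1 a = g a"
  using ipow_succ[of g 0 a] by simp

lemma ipow_m1: "isometry g \<Longrightarrow> ipow g (-1) a = inv g a"
  using ipow_pred[of g 0 a] by simp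

lemma ipow_dist:
  assumes "isometry g"
  shows "dist (ipow g k a) (ipow g k b) = dist a b"
proof (induction k rule: int_induct[where k=0])
  case base thus ?case by simp
next
  case (step1 i) thus ?case using ipow_succ[OF assms] isom_dist[OF assms] by simp
next
  case (step2 i) thus ?case using ipow_pred[OF assms] isom_inv_dist[OF assms] by simp
qed

lemma ipow_comm:
  assumes "isometry g"
  shows "ipow g k (g a) = g (ipow g k a)"
  using ipow_add[OF assms, of k 1 a] ipow_add[OF assms, of 1 k a] ipow_1[OF assms]
  by (simp add: add.commute)



lemma subadd_mult:
  fixes a :: "nat \<Rightarrow> real"
  assumes sub: "\<And>m n. a (m+n) \<le> a m + a n"
  shows "a (q*m + r) \<le> real q * a m + a r"
proof (induction q)
  case 0 thus ?case by simp
next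
  case (Suc q)
  have "a (Suc q * m + r) = a (m + (q*m + r))" by (simp add: algebra_simps)
  also have "\<dots> \<le> a m + a (q*m+r)" by (rule sub)
  finally show ?case using Suc by (simp add: algebra_simps)
qed

lemma fekete:
  fixes a :: "nat \<Rightarrow> real"
  assumes sub: "\<And>m n. a (m+n) \<le> a m + a n" and nn: "\<And>n. 0 \<le> a n" and a0: "a 0 = 0"
  shows "(\<lambda>n. a n / real n) \<longlonglongrightarrow> (INF n\<in>{1..}. a n / real n)"
proof -
  define L where "L = (INF n\<in>{1..}. a n / real n)"
  have bdd: "bdd_below ((\<lambda>n. a n / real n) ` {1..})"
    by (rule bdd_belowI[of _ 0]) (auto intro: nn divide_nonneg_nonneg)
  have low: "L \<le> a n / real n" if "n \<ge> 1" for n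
    unfolding L_def by (rule cINF_lower[OF bdd]) (use that in auto)
  have a1: "a r \<le> real r * a 1" for r
    using subadd_mult[OF sub, of r 1 0] a0 by simp
  show ?thesis unfolding L_def[symmetric]
  proof (rule LIMSEQ_I)
    fix e :: real assume e: "0 < e"
    have "(INF n\<in>{1..}. a n / real n) < L + e/2" using e L_def by simp
    then obtain m where m: "m \<ge> 1" "a m / real m < L + e/2"
      by (subst (asm) cINF_less_iff[OF _ bdd]) auto
    obtain N0 :: nat where N0: "real m * a 1 * 2 / e < real N0"
      using reals_Archimedean2 by blast
    define N where "N = max N0 1"
    have N: "N \<ge> 1" "real m * a 1 * 2 / e < real N" using N0 unfolding N_def by auto
    show "\<exists>no. \<forall>n\<ge>no. norm (a n / real n - L) < e"
    proof (intro exI allI impI)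
      fix n assume n: "N \<le> n"
      have npos: "real n > 0" using n N by auto
      define q where "q = n div m"
      define r where "r = n mod m"
      have nqr: "n = q*m + r" unfolding q_def r_def by simp
      have rm: "r < m" unfolding r_def using m by auto
      have "a n \<le> real q * a m + a r" using subadd_mult[OF sub] nqr by metis
      also have "a r \<le> real m * a 1" using a1[of r] rm nn[of 1]
        by (meson less_imp_le_nat mult_right_mono of_nat_le_iff order_trans)
      finally have an: "a n \<le> real q * a m + real m * a 1" by simp
      have "real q * real m \<le> real n" using nqr by (metis le_add1 of_nat_le_iff of_nat_mult)
      hence "real m * (real q * a m) \<le> real n * a m"
        using nn[of m] by (metis mult.assoc mult.commute mult_right_mono)
      hence "real q * a m \<le> real n * (a m / real m)"
        using m by (simp add: field_simps)
      hence "a n \<le> real n * (a m / real m) + real m * a 1" using an by linarith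
      hence f1: "a n / real n \<le> a m / real m + real m * a 1 / real n"
        using npos by (simp add: field_simps)
      have f2: "real m * a 1 / real n < e/2"
      proof -
        have "real m * a 1 * 2 / e < real n" using N n by (meson less_le_trans of_nat_le_iff)
        thus ?thesis using e npos by (simp add: field_simps)
      qed
      have f3: "L \<le> a n / real n" using low n N by auto
      have "a n / real n - L < e" using f1 f2 m(2) by linarith
      thus "norm (a n / real n - L) < e" using f3 e by auto
    qed
  qed
qed

context
  fixes \<gamma> :: "'a::metric_space \<Rightarrow> 'a"
  assumes iso: "isometry \<gamma>"
begin

lemma funpow_dist: "dist ((\<gamma>^^k) a) ((\<gamma>^^k) b) = dist a b"
  by (induction k) (auto simp: isom_dist[OF iso])

lemma disp_sub: "dist y ((\<gamma>^^(m+n)) y) \<le> dist y ((\<gamma>^^m) y) + dist y ((\<gamma>^^n) y)"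
proof -
  have "(\<gamma>^^(m+n)) y = (\<gamma>^^m) ((\<gamma>^^n) y)" by (simp add: funpow_add)
  moreover have "dist y ((\<gamma>^^m) ((\<gamma>^^n) y)) \<le> dist y ((\<gamma>^^m) y) + dist ((\<gamma>^^m) y) ((\<gamma>^^m) ((\<gamma>^^n) y))"
    by (rule dist_triangle)
  ultimately show ?thesis using funpow_dist by simp
qed

lemma asymp_le: "asymp_disp \<gamma> \<le> dist y (\<gamma> y)"
proof -
  define A where "A x n = dist x ((\<gamma>^^n) x)" for x n
  define L where "L = (INF n\<in>{1..}. A y n / real n)"
  have conv: "(\<lambda>n. A y n / real n) \<longlonglongrightarrow> L" unfolding L_def
    by (rule fekete) (auto simp: A_def disp_sub)
  have all: "(\<lambda>n. dist x ((\<gamma>^^n) x) / real n) \<longlonglongrightarrow> L" for x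
  proof -
    have d: "\<bar>A x n - A y n\<bar> \<le> 2 * dist x y" for n
    proof -
      have "A x n \<le> dist x y + A y n + dist ((\<gamma>^^n) y) ((\<gamma>^^n) x)"
        unfolding A_def by (metis dist_triangle order_trans add_right_mono dist_commute)
      moreover have "A y n \<le> dist y x + A x n + dist ((\<gamma>^^n) x) ((\<gamma>^^n) y)"
        unfolding A_def by (metis dist_triangle order_trans add_right_mono dist_commute)
      ultimately show ?thesis using funpow_dist[of n x y] by (simp add: dist_commute)
    qed
    have z: "(\<lambda>n. (A x n - A y n) / real n) \<longlonglongrightarrow> 0"
    proof (rule Lim_null_comparison)
      show "\<forall>\<^sub>F n in sequentially. norm ((A x n - A y n) / real n) \<le> 2 * dist x y / real n"
        using d by (auto simp: divide_right_mono)
      show "(\<lambda>n. 2 * dist x y / real n) \<longlonglongrightarrow> 0" by (rule lim_const_over_n)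
    qed
    have "(\<lambda>n. A y n / real n + (A x n - A y n) / real n) \<longlonglongrightarrow> L + 0"
      by (intro tendsto_add conv z)
    moreover have "A y n / real n + (A x n - A y n) / real n = A x n / real n" for n
      by (simp add: diff_divide_distrib)
    ultimately show ?thesis by (simp add: A_def)
  qed
  have "asymp_disp \<gamma> = L"
    unfolding asymp_disp_def
  proof (rule the_equality)
    show "\<forall>x. (\<lambda>k. dist x ((\<gamma> ^^ k) x) / real k) \<longlonglongrightarrow> L" using all by blast
    fix L' assume "\<forall>x. (\<lambda>k. dist x ((\<gamma> ^^ k) x) / real k) \<longlonglongrightarrow> L'"
    thus "L' = L" using all[of y] LIMSEQ_unique by blast
  qed
  moreover have "L \<le> A y 1 / real 1" unfolding L_def
    by (rule cINF_lower) (auto intro!: bdd_belowI[of _ 0] simp: A_def)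
  ultimately show ?thesis by (simp add: A_def)
qed

lemma bdd_disp: "bdd_below (range (\<lambda>x. dist x (\<gamma> x)))"
  by (rule bdd_belowI[of _ 0]) auto

lemma min_disp_le: "min_disp \<gamma> \<le> dist z (\<gamma> z)"
  unfolding min_disp_def by (rule cINF_lower[OF bdd_disp]) auto

lemma asymp_le_min: "asymp_disp \<gamma> \<le> min_disp \<gamma>"
  unfolding min_disp_def by (rule cINF_greatest) (auto intro: asymp_le)

end



locale mpt =
  fixes \<delta> :: real and \<gamma> :: "'a::metric_space \<Rightarrow> 'a" and x :: 'a
  assumes hyp: "delta_hyperbolic TYPE('a) \<delta>"
    and iso: "isometry \<gamma>"
    and xmin: "x \<in> Mmin \<gamma>"
    and big: "min_disp \<gamma> > 3 * \<delta>"
begin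

definition X :: "int \<Rightarrow> 'a" where "X k = ipow \<gamma> k x"

abbreviation "s0 \<equiv> dist x (\<gamma> x)"

lemma s0_eq: "s0 = min_disp \<gamma>" using xmin unfolding Mmin_def by auto

lemma s0_big: "s0 > 3 * \<delta>" using s0_eq big by simp

lemma dnn: "0 \<le> \<delta>" using delta_nonneg[OF hyp] .

lemma X0[simp]: "X 0 = x" by (simp add: X_def)
lemma X1: "X 1 = \<gamma> x" by (simp add: X_def ipow_1[OF iso])
lemma Xm1: "X (-1) = inv \<gamma> x" by (simp add: X_def ipow_m1[OF iso])

lemma X_shift: "X (i + m) = ipow \<gamma> m (X i)"
  unfolding X_def using ipow_add[OF iso, of m i x] by (simp add: add.commute)

lemma X_dist: "dist (X i) (X j) = dist x (X (j - i))"
proof -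
  have "X j = ipow \<gamma> i (X (j - i))" using X_shift[of "j - i" i] by simp
  thus ?thesis using ipow_dist[OF iso] by (simp add: X_def)
qed

lemma X_step: "dist (X i) (X (i+1)) = s0"
  using X_dist[of i "i+1"] X1 by simp

lemma gprod_shift: "gprod (X (j+m)) (X (i+m)) (X (k+m)) = gprod (X j) (X i) (X k)"
  unfolding X_shift by (rule gprod_iso) (rule ipow_dist[OF iso])

lemma step:
  assumes a: "a \<ge> 1" and b: "b \<ge> 1"
    and IH1: "gprod (X 1) (X 0) (X b) \<le> 3/2*\<delta>"
    and IH2: "gprod (X (-1)) (X (-a)) (X 0) \<le> 3/2*\<delta>"
  shows "gprod (X 0) (X (-a)) (X b) \<le> 3/2*\<delta>"
proof -
  define Q where "Q = 3/2*\<delta>"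
  define P where "P = gprod x (X (-a)) (X b)"
  obtain \<sigma> where \<sigma>: "geod_seg \<sigma> x (\<gamma> x)" using geod_exists[OF hyp] by blast
  define \<tau> where "\<tau> = inv \<gamma> \<circ> (\<lambda>v. \<sigma> (s0 - v))"
  have \<tau>: "geod_seg \<tau> x (X (-1))"
  proof -
    have "geod_seg (inv \<gamma> \<circ> (\<lambda>v. \<sigma> (s0 - v))) (inv \<gamma> (\<gamma> x)) (inv \<gamma> x)"
      by (rule geod_seg_iso[OF geod_seg_rev[OF \<sigma>]]) (rule isom_inv_dist[OF iso])
    thus ?thesis using isom_inv2[OF iso] Xm1 \<tau>_def by simp
  qed
  have dXm1: "dist x (X (-1)) = s0"
    using Xm1 isom_inv_dist[OF iso, of x "\<gamma> x"] isom_inv2[OF iso] by (simp add: dist_commute)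
  obtain A where A: "geod_seg A x (X b)" using geod_exists[OF hyp] by blast
  obtain B where B: "geod_seg B x (X (-a))" using geod_exists[OF hyp] by blast
  have F1: "gprod x (\<gamma> x) (X b) \<ge> s0 - Q"
    using gprod_swap[of x "X 1" "X b"] IH1 X1 Q_def by simp
  have F2: "gprod x (X (-a)) (X (-1)) \<ge> s0 - Q"
    using gprod_swap[of x "X (-1)" "X (-a)"] IH2 dXm1 Q_def gprod_sym[of "X (-1)" "X (-a)" "X 0"]
      gprod_sym[of x "X (-a)" "X (-1)"] by simp
  have Qs: "Q \<le> s0/2" using s0_big Q_def by simp
  define t where "t = min P (s0/2)"
  have t0: "0 \<le> t" using gprod_nonneg[of x "X (-a)" "X b"] P_def t_def s0_big dnn by auto
  have ts: "t \<le> s0/2" using t_def by simp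
  have d1: "dist (\<sigma> t) (A t) \<le> \<delta>"
    by (rule thin[OF hyp \<sigma> A t0]) (use F1 Qs ts in linarith)
  have d2: "dist (A t) (B t) \<le> \<delta>"
  proof (rule thin[OF hyp A B t0])
    have "t \<le> P" using t_def by simp
    thus "t \<le> gprod x (X b) (X (- a))" using P_def gprod_sym[of x "X b" "X (-a)"] by simp
  qed
  have d3: "dist (B t) (\<tau> t) \<le> \<delta>"
    by (rule thin[OF hyp B \<tau> t0]) (use F2 Qs ts in linarith)
  define m where "m = \<sigma> (s0/2)"
  have tau_m: "\<tau> (s0/2) = inv \<gamma> m" unfolding \<tau>_def m_def by simp
  have e1: "dist m (\<sigma> t) = s0/2 - t"
    using geod_seg_dist[OF \<sigma>, of "s0/2" t] t0 ts unfolding m_def by simp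
  have e2: "dist (\<tau> t) (inv \<gamma> m) = s0/2 - t"
    using geod_seg_dist[OF \<tau>, of t "s0/2"] t0 ts dXm1 tau_m by simp
  have e3: "s0 \<le> dist m (inv \<gamma> m)"
    using min_disp_le[OF iso, of "inv \<gamma> m"] s0_eq isom_inv1[OF iso, of m] by (simp add: dist_commute)
  have "dist m (inv \<gamma> m) \<le> dist m (\<sigma> t) + dist (\<sigma> t) (A t) + dist (A t) (B t) + dist (B t) (\<tau> t) + dist (\<tau> t) (inv \<gamma> m)"
    by (smt (verit) dist_triangle)
  hence "s0 \<le> s0 - 2*t + 3*\<delta>" using e1 e2 e3 d1 d2 d3 by linarith
  hence "t \<le> 3/2*\<delta>" by simp
  moreover have "t = P" using \<open>t \<le> 3/2*\<delta>\<close> s0_big t_def by (auto simp: min_def split: if_splits)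
  ultimately show ?thesis using P_def by simp
qed

lemma chain_aux:
  "\<forall>i j k. i \<le> j \<and> j \<le> k \<and> nat (k - i) \<le> n \<longrightarrow> gprod (X j) (X i) (X k) \<le> 3/2*\<delta>"
proof (induction n)
  case 0
  show ?case
  proof (intro allI impI)
    fix i j k :: int assume "i \<le> j \<and> j \<le> k \<and> nat (k - i) \<le> 0"
    hence "j = i" "k = i" by auto
    thus "gprod (X j) (X i) (X k) \<le> 3/2*\<delta>" using dnn by (simp add: gprod_def)
  qed
next
  case (Suc n)
  show ?case
  proof (intro allI impI)
    fix i j k :: int assume h: "i \<le> j \<and> j \<le> k \<and> nat (k - i) \<le> Suc n"
    show "gprod (X j) (X i) (X k) \<le> 3/2*\<delta>"
    proof (cases "j = i \<or> j = k")
      case True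
      thus ?thesis using dnn by (auto simp: gprod_def dist_commute)
    next
      case False
      define a where "a = j - i"
      define b where "b = k - j"
      have a: "a \<ge> 1" and b: "b \<ge> 1" using False h a_def b_def by auto
      have nb: "nat (b - 0) \<le> n" and na: "nat (0 - (-a)) \<le> n" using a b h a_def b_def by auto
      have IH1: "gprod (X 1) (X 0) (X b) \<le> 3/2*\<delta>"
        using Suc.IH[rule_format, of 0 1 b] a b nb by auto
      have IH2: "gprod (X (-1)) (X (-a)) (X 0) \<le> 3/2*\<delta>"
        using Suc.IH[rule_format, of "-a" "-1" 0] a b na by auto
      have "gprod (X 0) (X (-a)) (X b) \<le> 3/2*\<delta>" by (rule step[OF a b IH1 IH2])
      moreover have "gprod (X (0+j)) (X (-a+j)) (X (b+j)) = gprod (X 0) (X (-a)) (X b)"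
        by (rule gprod_shift)
      ultimately show ?thesis using a_def b_def by simp
    qed
  qed
qed

lemma chain:
  assumes "i \<le> j" "j \<le> k"
  shows "gprod (X j) (X i) (X k) \<le> 3/2*\<delta>"
  using chain_aux[of "nat (k - i)"] assms by blast

lemma gprod_fwd:
  assumes "0 \<le> p" "p \<le> m"
  shows "gprod x (X m) (X p) \<ge> dist x (X p) - 3/2*\<delta>"
  using gprod_swap[of x "X p" "X m"] chain[of 0 p m] assms gprod_sym[of x "X m" "X p"] by simp

lemma gprod_bwd:
  assumes "m \<le> p" "p \<le> 0"
  shows "gprod x (X m) (X p) \<ge> dist x (X p) - 3/2*\<delta>"
  using gprod_swap[of x "X p" "X m"] chain[of m p 0] assms gprod_sym[of x "X m" "X p"]
    gprod_sym[of "X p" "X m" "X 0"] by simp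

lemma growth: "dist x (X (int n)) \<ge> real n * (s0 - 3*\<delta>)"
proof (induction n)
  case 0 thus ?case by simp
next
  case (Suc n)
  have c: "gprod (X (int n)) (X 0) (X (int n+1)) \<le> 3/2*\<delta>" using chain[of 0 "int n" "int n + 1"] by simp
  have "dist (X (int n)) (X (int n+1)) = s0" by (rule X_step)
  hence "dist x (X (int n+1)) \<ge> dist x (X (int n)) + s0 - 3*\<delta>"
    using c unfolding gprod_def by (simp add: dist_commute field_simps)
  moreover have "int (Suc n) = int n + 1" by simp
  ultimately show ?case using Suc by (simp add: algebra_simps)
qed

lemma growth_neg: "dist x (X (- int n)) \<ge> real n * (s0 - 3*\<delta>)"
  using growth[of n] X_dist[of "- int n" 0] by (simp add: dist_commute)

end



lemma gprod_sum_base: "gprod y x z + gprod z x y = dist y z"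
  by (simp add: gprod_def dist_commute field_simps)

context mpt begin

definition kap where "kap = s0 - 3*\<delta>"
definition rr where "rr = 5/2*\<delta>"

definition sg :: "nat \<Rightarrow> real \<Rightarrow> 'a" where
  "sg n = (SOME c. geod_seg c (X (- int n)) (X (int n)))"
definition Ln where "Ln n = dist (X (- int n)) (X (int n))"
definition un where "un n = gprod (X (- int n)) x (X (int n))"
definition fn :: "nat \<Rightarrow> real \<Rightarrow> 'a" where
  "fn n t = sg n (max 0 (min (Ln n) (un n + t)))"

lemma sg: "geod_seg (sg n) (X (- int n)) (X (int n))"
  unfolding sg_def by (rule someI_ex[OF geod_exists[OF hyp]])

lemma kap_pos: "kap > 0" using s0_big kap_def by simp

lemma un_nn: "0 \<le> un n" unfolding un_def by (rule gprod_nonneg)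
lemma un_le: "un n \<le> Ln n" unfolding un_def Ln_def by (rule gprod_le2)

lemma chain0: "gprod x (X (- int n)) (X (int n)) \<le> 3/2*\<delta>"
  using chain[of "- int n" 0 "int n"] by simp

lemma un_big: "un n \<ge> real n * kap - 3/2*\<delta>"
  using gprod_swap[of "X (- int n)" x "X (int n)"] chain0[of n] growth_neg[of n]
  unfolding un_def kap_def by (simp add: dist_commute)

lemma Lu_big: "Ln n - un n \<ge> real n * kap - 3/2*\<delta>"
proof -
  have "Ln n - un n = gprod (X (int n)) x (X (- int n))"
    using gprod_sum_base[of "X (- int n)" x "X (int n)"] unfolding Ln_def un_def by simp
  moreover have "gprod (X (int n)) x (X (- int n)) + gprod x (X (int n)) (X (- int n)) = dist (X (int n)) x"
    by (rule gprod_swap)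
  moreover have "gprod x (X (int n)) (X (- int n)) \<le> 3/2*\<delta>" using chain0[of n] gprod_sym by metis
  ultimately show ?thesis using growth[of n] unfolding kap_def by (simp add: dist_commute)
qed

lemma clamp_in: "0 \<le> max 0 (min (Ln n) (un n + t)) \<and> max 0 (min (Ln n) (un n + t)) \<le> Ln n"
  using un_nn un_le by (auto simp: Ln_def)

lemma fn_lip: "dist (fn n a) (fn n b) \<le> \<bar>a - b\<bar>"
proof -
  have "dist (fn n a) (fn n b) = \<bar>max 0 (min (Ln n) (un n + a)) - max 0 (min (Ln n) (un n + b))\<bar>"
    unfolding fn_def using geod_seg_dist[OF sg] clamp_in[of n a] clamp_in[of n b] by (simp add: Ln_def)
  also have "\<dots> \<le> \<bar>a - b\<bar>" by (auto simp: max_def min_def abs_if)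
  finally show ?thesis .
qed

lemma fn_exact:
  assumes "- un n \<le> t" "t \<le> Ln n - un n"
  shows "fn n t = sg n (un n + t)"
proof -
  have "max 0 (min (Ln n) (un n + t)) = un n + t" using assms un_nn[of n] by auto
  thus ?thesis unfolding fn_def by simp
qed

lemma fn_iso:
  assumes "\<bar>a\<bar> \<le> real n * kap - 3/2*\<delta>" "\<bar>b\<bar> \<le> real n * kap - 3/2*\<delta>"
  shows "dist (fn n a) (fn n b) = \<bar>a - b\<bar>"
proof -
  have ra: "- un n \<le> a" "a \<le> Ln n - un n" using assms un_big[of n] Lu_big[of n] by auto
  have rb: "- un n \<le> b" "b \<le> Ln n - un n" using assms un_big[of n] Lu_big[of n] by auto
  show ?thesis using fn_exact[OF ra] fn_exact[OF rb] geod_seg_dist[OF sg[of n], of "un n + a" "un n + b"] ra rb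
    by (simp add: Ln_def)
qed

lemma fn0_eq: "fn n 0 = sg n (un n)"
  using fn_exact[of n 0] un_nn[of n] un_le[of n] by simp

lemma fn0: "dist x (fn n 0) \<le> rr"
  using dist_side[OF hyp sg, of x n] chain0[of n] fn0_eq unfolding un_def rr_def by simp

lemma fn_bound: "dist x (fn n t) \<le> rr + \<bar>t\<bar>"
  using fn0[of n] fn_lip[of n t 0] dist_triangle[of x "fn n t" "fn n 0"] by (simp add: dist_commute)

lemma fn_fwd:
  assumes s: "0 \<le> s" "s \<le> real n * kap - 3/2*\<delta>"
  shows "gprod x (fn n s) (X (int n)) \<ge> s - rr"
proof -
  define u where "u = un n"
  define L where "L = Ln n"
  have r: "- un n \<le> s" "s \<le> Ln n - un n" using s un_nn[of n] Lu_big[of n] by auto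
  have fs: "fn n s = sg n (u + s)" using fn_exact[OF r] u_def by simp
  have u0: "0 \<le> u" "u \<le> L" using un_nn un_le u_def L_def by auto
  have e: "fn n 0 = sg n u" using fn0_eq u_def by simp
  have d1: "dist (sg n (u + s)) (X (int n)) = L - u - s"
    using geod_seg_dist2[OF sg[of n], of "u+s"]  r u_def L_def Ln_def u0 s by simp
  have d2: "dist (sg n u) (X (int n)) = L - u"
    using geod_seg_dist2[OF sg[of n], of "u"]  u_def L_def Ln_def u0 by simp
  have d3: "dist (sg n u) (sg n (u + s)) = s"
    using geod_seg_dist[OF sg[of n], of u "u+s"]  u_def L_def Ln_def u0 r s by simp
  have x0: "dist x (sg n u) \<le> rr" using fn0[of n] e by simp
  have "dist (sg n u) (sg n (u + s)) \<le> dist (sg n u) x + dist x (sg n (u+s))" by (rule dist_triangle)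
  hence a1: "dist x (sg n (u+s)) \<ge> s - rr" using d3 x0 by (simp add: dist_commute)
  have "dist (sg n u) (X (int n)) \<le> dist (sg n u) x + dist x (X (int n))" by (rule dist_triangle)
  hence a2: "dist x (X (int n)) \<ge> L - u - rr" using d2 x0 by (simp add: dist_commute)
  show ?thesis unfolding fs gprod_def using a1 a2 d1 by simp
qed

lemma fn_bwd:
  assumes s: "s \<le> 0" "- s \<le> real n * kap - 3/2*\<delta>"
  shows "gprod x (fn n s) (X (- int n)) \<ge> - s - rr"
proof -
  define u where "u = un n"
  define L where "L = Ln n"
  have r: "- un n \<le> s" "s \<le> Ln n - un n" using s un_big[of n] un_le[of n] un_nn[of n] by auto
  have fs: "fn n s = sg n (u + s)" using fn_exact[OF r] u_def by simp
  have u0: "0 \<le> u" "u \<le> L" using un_nn un_le u_def L_def by auto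
  have e: "fn n 0 = sg n u" using fn0_eq u_def by simp
  have d1: "dist (X (- int n)) (sg n (u + s)) = u + s"
    using geod_seg_dist1[OF sg[of n], of "u+s"]  r u_def L_def Ln_def u0 s by simp
  have d2: "dist (X (- int n)) (sg n u) = u"
    using geod_seg_dist1[OF sg[of n], of "u"]  u_def L_def Ln_def u0 by simp
  have d3: "dist (sg n u) (sg n (u + s)) = - s"
    using geod_seg_dist[OF sg[of n], of u "u+s"]  u_def L_def Ln_def u0 r s by simp
  have x0: "dist x (sg n u) \<le> rr" using fn0[of n] e by simp
  have "dist (sg n u) (sg n (u + s)) \<le> dist (sg n u) x + dist x (sg n (u+s))" by (rule dist_triangle)
  hence a1: "dist x (sg n (u+s)) \<ge> - s - rr" using d3 x0 by (simp add: dist_commute)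
  have "dist (X (- int n)) (sg n u) \<le> dist (X (- int n)) x + dist x (sg n u)" by (rule dist_triangle)
  hence a2: "dist x (X (- int n)) \<ge> u - rr" using d2 x0 by (simp add: dist_commute)
  show ?thesis unfolding fs gprod_def using a1 a2 d1 by (simp add: dist_commute)
qed

end



context mpt begin

lemma exists_line:
  "\<exists>c. geod_line c \<and> dist x (c 0) \<le> rr \<and>
     (\<forall>s\<ge>0. \<forall>p\<ge>0. gprod x (c s) (X p) \<ge> min (s - rr) (dist x (X p) - 3/2*\<delta>) - \<delta>) \<and>
     (\<forall>s\<le>0. \<forall>p\<le>0. gprod x (c s) (X p) \<ge> min (- s - rr) (dist x (X p) - 3/2*\<delta>) - \<delta>)"
proof -
  obtain m :: "real \<Rightarrow> nat" where "bij_betw m \<rat> UNIV"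
    using countable_rat Rats_infinite by (erule countableE_infinite)
  then obtain q :: "nat \<Rightarrow> real" where bij: "bij_betw q UNIV \<rat>"
    using bij_betw_inv by blast
  have dense_q: "\<And>a b. a < b \<Longrightarrow> \<exists>n. a < q n \<and> q n < b"
    by (metis Rats_dense_in_real bij f_the_inv_into_f bij_betw_def)
  let ?P = "\<lambda>k. \<lambda>s. convergent (\<lambda>j. fn (s j) (q k))"
  interpret nat: subseqs ?P
  proof (unfold subseqs_def, intro allI impI)
    fix k :: nat and s :: "nat \<Rightarrow> nat" assume s: "strict_mono s"
    have "\<forall>j. fn (s j) (q k) \<in> cball x (rr + \<bar>q k\<bar>)" using fn_bound by auto
    then obtain l r where "strict_mono (r :: nat \<Rightarrow> nat)" "((\<lambda>j. fn (s j) (q k)) \<circ> r) \<longlonglongrightarrow> l"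
      using seq_compactE[OF compact_imp_seq_compact[OF proper[OF hyp]]] by metis
    thus "\<exists>r'. strict_mono r' \<and> convergent (\<lambda>j. fn ((s \<circ> r') j) (q k))"
      by (auto simp: convergent_def comp_def)
  qed
  define d where "d = nat.diagseq"
  have subseq: "strict_mono d"
    unfolding d_def using nat.subseq_diagseq by auto
  have conv_q: "?P k d" for k
  proof -
    have Pn_seqseq: "?P k (nat.seqseq (Suc k))"
      by (rule nat.seqseq_holds)
    have 1: "(\<lambda>j. fn ((nat.seqseq (Suc k) \<circ> (\<lambda>j. nat.fold_reduce (Suc k) j
      (Suc k + j))) j) (q k)) = (\<lambda>j. fn (nat.seqseq (Suc k) j) (q k)) \<circ>
      (\<lambda>j. nat.fold_reduce (Suc k) j (Suc k + j))"
      by auto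
    have 2: "?P k (d \<circ> ((+) (Suc k)))"
      unfolding d_def nat.diagseq_seqseq 1
      by (intro convergent_subseq_convergent Pn_seqseq nat.subseq_diagonal_rest)
    then obtain L where 3: "(\<lambda>j. fn (d (j + Suc k)) (q k)) \<longlonglongrightarrow> L"
      by (auto simp: add.commute dest: convergentD)
    then have "(\<lambda>j. fn (d j) (q k)) \<longlonglongrightarrow> L"
      by (rule LIMSEQ_offset)
    then show ?thesis
      by (auto simp: convergent_def)
  qed
  have cauchy: "Cauchy (\<lambda>j. fn (d j) t)" for t
  proof (rule metric_CauchyI)
    fix e :: real assume e: "0 < e"
    obtain k where k: "t - e/3 < q k" "q k < t + e/3" using dense_q[of "t - e/3" "t + e/3"] e by auto
    have "Cauchy (\<lambda>j. fn (d j) (q k))" using conv_q[of k] by (auto simp: convergent_def intro: LIMSEQ_imp_Cauchy)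
    then obtain M where M: "\<forall>m\<ge>M. \<forall>n\<ge>M. dist (fn (d m) (q k)) (fn (d n) (q k)) < e/3"
      using metric_CauchyD e by (metis divide_pos_pos zero_less_numeral)
    show "\<exists>M. \<forall>m\<ge>M. \<forall>n\<ge>M. dist (fn (d m) t) (fn (d n) t) < e"
    proof (intro exI allI impI)
      fix a b assume ab: "M \<le> a" "M \<le> b"
      have "dist (fn (d a) t) (fn (d b) t) \<le> dist (fn (d a) t) (fn (d a) (q k)) + dist (fn (d a) (q k)) (fn (d b) (q k)) + dist (fn (d b) (q k)) (fn (d b) t)"
        by (smt (verit) dist_triangle)
      moreover have "dist (fn (d a) t) (fn (d a) (q k)) < e/3" using fn_lip[of "d a" t "q k"] k by auto
      moreover have "dist (fn (d b) (q k)) (fn (d b) t) < e/3" using fn_lip[of "d b" "q k" t] k by auto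
      moreover have "dist (fn (d a) (q k)) (fn (d b) (q k)) < e/3" using M ab by auto
      ultimately show "dist (fn (d a) t) (fn (d b) t) < e" by linarith
    qed
  qed
  define c where "c t = lim (\<lambda>j. fn (d j) t)" for t
  have conv: "(\<lambda>j. fn (d j) t) \<longlonglongrightarrow> c t" for t
  proof -
    have "complete (cball x (rr + \<bar>t\<bar>))" by (rule compact_imp_complete[OF proper[OF hyp]])
    moreover have "\<forall>j. fn (d j) t \<in> cball x (rr + \<bar>t\<bar>)" using fn_bound by auto
    ultimately obtain l where "(\<lambda>j. fn (d j) t) \<longlonglongrightarrow> l" using cauchy completeE by metis
    thus ?thesis unfolding c_def by (simp add: limI)
  qed
  have dge: "j \<le> d j" for j using seq_suble[OF subseq] .
  have bigN: "\<exists>N. \<forall>j\<ge>N. a \<le> real (d j) * kap - 3/2*\<delta>" for a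
  proof -
    obtain N :: nat where N: "(a + 3/2*\<delta>) / kap < real N" using reals_Archimedean2 by blast
    show ?thesis
    proof (intro exI allI impI)
      fix j assume "N \<le> j"
      hence "real N \<le> real (d j)" using dge[of j] by simp
      hence "(a + 3/2*\<delta>) / kap \<le> real (d j)" using N by simp
      thus "a \<le> real (d j) * kap - 3/2*\<delta>" using kap_pos by (simp add: field_simps)
    qed
  qed
  have line: "geod_line c"
    unfolding geod_line_def
  proof (intro allI)
    fix a b
    have t: "(\<lambda>j. dist (fn (d j) a) (fn (d j) b)) \<longlonglongrightarrow> dist (c a) (c b)"
      by (intro tendsto_dist conv)
    obtain N where N: "\<forall>j\<ge>N. max \<bar>a\<bar> \<bar>b\<bar> \<le> real (d j) * kap - 3/2*\<delta>" using bigN by blast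
    have "eventually (\<lambda>j. \<bar>a - b\<bar> = dist (fn (d j) a) (fn (d j) b)) sequentially"
      unfolding eventually_sequentially using N fn_iso by (metis max.bounded_iff)
    hence "(\<lambda>j. dist (fn (d j) a) (fn (d j) b)) \<longlonglongrightarrow> \<bar>a - b\<bar>"
      by (rule Lim_transform_eventually[OF tendsto_const])
    thus "dist (c a) (c b) = \<bar>a - b\<bar>" using t LIMSEQ_unique by blast
  qed
  have c0: "dist x (c 0) \<le> rr"
  proof (rule LIMSEQ_le_const2)
    show "(\<lambda>j. dist x (fn (d j) 0)) \<longlonglongrightarrow> dist x (c 0)" by (intro tendsto_dist tendsto_const conv)
    show "\<exists>N. \<forall>n\<ge>N. dist x (fn (d n) 0) \<le> rr" using fn0 by auto
  qed
  have approx: "\<exists>j. N \<le> d j \<and> a \<le> real (d j) * kap - 3/2*\<delta> \<and> dist (fn (d j) s) (c s) < e"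
    if e: "e > 0" for N :: nat and a s e
  proof -
    obtain N1 where N1: "\<forall>j\<ge>N1. a \<le> real (d j) * kap - 3/2*\<delta>" using bigN by blast
    obtain N2 where N2: "\<forall>j\<ge>N2. dist (fn (d j) s) (c s) < e" using conv[of s] e unfolding lim_sequentially by blast
    let ?j = "max N (max N1 N2)"
    have "N \<le> d ?j" using dge[of ?j] by simp
    moreover have "a \<le> real (d ?j) * kap - 3/2*\<delta>" using N1 by simp
    moreover have "dist (fn (d ?j) s) (c s) < e" using N2 by simp
    ultimately show ?thesis by blast
  qed
  have fwd: "gprod x (c s) (X p) \<ge> min (s - rr) (dist x (X p) - 3/2*\<delta>) - \<delta>"
    if s: "s \<ge> 0" and p: "p \<ge> 0" for s p
  proof (rule field_le_epsilon)
    fix e :: real assume e: "0 < e"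
    obtain j where j: "nat p \<le> d j" "s \<le> real (d j) * kap - 3/2*\<delta>" "dist (fn (d j) s) (c s) < e"
      using approx[OF e] by blast
    define n where "n = d j"
    have g1: "gprod x (fn n s) (X (int n)) \<ge> s - rr" using fn_fwd[of s n] s j n_def by simp
    have g2: "gprod x (fn n s) (X (int n)) \<le> gprod x (c s) (X (int n)) + dist (fn n s) (c s)"
      by (rule gprod_lip2)
    have g3: "gprod x (X (int n)) (X p) \<ge> dist x (X p) - 3/2*\<delta>"
      using gprod_fwd[of p "int n"] p j n_def by simp
    have g4: "gprod x (c s) (X p) \<ge> min (gprod x (c s) (X (int n))) (gprod x (X (int n)) (X p)) - \<delta>"
      by (rule four_point[OF hyp])
    show "min (s - rr) (dist x (X p) - 3/2*\<delta>) - \<delta> \<le> gprod x (c s) (X p) + e"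
      using g1 g2 g3 g4 j(3) n_def e by (auto simp: min_def split: if_splits)
  qed
  have bwd: "gprod x (c s) (X p) \<ge> min (- s - rr) (dist x (X p) - 3/2*\<delta>) - \<delta>"
    if s: "s \<le> 0" and p: "p \<le> 0" for s p
  proof (rule field_le_epsilon)
    fix e :: real assume e: "0 < e"
    obtain j where j: "nat (- p) \<le> d j" "- s \<le> real (d j) * kap - 3/2*\<delta>" "dist (fn (d j) s) (c s) < e"
      using approx[OF e] by blast
    define n where "n = d j"
    have g1: "gprod x (fn n s) (X (- int n)) \<ge> - s - rr" using fn_bwd[of s n] s j n_def by simp
    have g2: "gprod x (fn n s) (X (- int n)) \<le> gprod x (c s) (X (- int n)) + dist (fn n s) (c s)"
      by (rule gprod_lip2)
    have g3: "gprod x (X (- int n)) (X p) \<ge> dist x (X p) - 3/2*\<delta>"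
      using gprod_bwd[of "- int n" p] p j n_def by simp
    have g4: "gprod x (c s) (X p) \<ge> min (gprod x (c s) (X (- int n))) (gprod x (X (- int n)) (X p)) - \<delta>"
      by (rule four_point[OF hyp])
    show "min (- s - rr) (dist x (X p) - 3/2*\<delta>) - \<delta> \<le> gprod x (c s) (X p) + e"
      using g1 g2 g3 g4 j(3) n_def e by (auto simp: min_def split: if_splits)
  qed
  show ?thesis using line c0 fwd bwd by blast
qed

end



definition goodline :: "('a::metric_space \<Rightarrow> 'a) \<Rightarrow> (real \<Rightarrow> 'a) \<Rightarrow> bool" where
  "goodline g c \<longleftrightarrow> geod_line c \<and>
      (\<forall>x. same_ideal_limit c at_top (\<lambda>p. ipow g (int p) x) sequentially) \<and>
      (\<forall>x. same_ideal_limit c at_bot (\<lambda>p. ipow g (- int p) x) sequentially)"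

lemma Mset_good: "Mset g = \<Union> {range c | c. goodline g c}"
  unfolding Mset_def goodline_def by simp

lemma goodline_in: "goodline g c \<Longrightarrow> c t \<in> Mset g"
  unfolding Mset_good by blast

lemma Mset_elim: "y \<in> Mset g \<Longrightarrow> \<exists>c t. goodline g c \<and> y = c t"
  unfolding Mset_good by blast

lemma infdist_lessD:
  assumes "infdist z A < e" "A \<noteq> {}"
  shows "\<exists>a\<in>A. dist z a < e"
  using assms by (simp add: infdist_notempty cINF_less_iff)

context mpt begin

lemma good_exists: "\<exists>c. goodline \<gamma> c \<and> dist x (c 0) \<le> rr"
proof -
  obtain c where c: "geod_line c" "dist x (c 0) \<le> rr"
    and fwd: "\<forall>s\<ge>0. \<forall>p\<ge>0. gprod x (c s) (X p) \<ge> min (s - rr) (dist x (X p) - 3/2*\<delta>) - \<delta>"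
    and bwd: "\<forall>s\<le>0. \<forall>p\<le>0. gprod x (c s) (X p) \<ge> min (- s - rr) (dist x (X p) - 3/2*\<delta>) - \<delta>"
    using exists_line by blast
  have Nex: "\<exists>N::nat. a \<le> real N * kap" for a
  proof -
    obtain N :: nat where "a / kap < real N" using reals_Archimedean2 by blast
    thus ?thesis using kap_pos by (intro exI[of _ N]) (simp add: field_simps)
  qed
  have top: "same_ideal_limit c at_top (\<lambda>p. ipow \<gamma> (int p) y) sequentially" for y
    unfolding same_ideal_limit_def
  proof (intro allI)
    fix w R
    define D where "D = dist w x + dist x y"
    define S where "S = max 0 (R + D + rr + \<delta>)"
    obtain N where N: "R + D + 3/2*\<delta> + \<delta> \<le> real N * kap" using Nex by blast
    show "\<forall>\<^sub>F (s, p) in at_top \<times>\<^sub>F sequentially. R \<le> gprod w (c s) (ipow \<gamma> (int p) y)"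
      unfolding eventually_prod_filter
    proof (intro exI conjI allI impI)
      show "eventually (\<lambda>s. S \<le> s) at_top" by simp
      show "eventually (\<lambda>p. N \<le> p) sequentially" by simp
      fix s p assume s: "S \<le> s" and p: "N \<le> p"
      have "real N * kap \<le> real p * kap" using p kap_pos by simp
      hence dp: "dist x (X (int p)) \<ge> R + D + 3/2*\<delta> + \<delta>" using growth[of p] N kap_def by simp
      have g0: "gprod x (c s) (X (int p)) \<ge> min (s - rr) (dist x (X (int p)) - 3/2*\<delta>) - \<delta>"
        using fwd s S_def by simp
      have g1: "gprod x (c s) (ipow \<gamma> (int p) y) \<le> gprod w (c s) (ipow \<gamma> (int p) y) + dist x w"
        by (rule gprod_lip1)
      have g2: "gprod x (c s) (X (int p)) \<le> gprod x (c s) (ipow \<gamma> (int p) y) + dist (X (int p)) (ipow \<gamma> (int p) y)"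
        by (rule gprod_lip3)
      have g3: "dist (X (int p)) (ipow \<gamma> (int p) y) = dist x y" unfolding X_def by (rule ipow_dist[OF iso])
      have "min (s - rr) (dist x (X (int p)) - 3/2*\<delta>) \<ge> R + D + \<delta>" using dp s S_def by auto
      hence "gprod x (c s) (X (int p)) \<ge> R + D" using g0 by linarith
      hence "R \<le> gprod w (c s) (ipow \<gamma> (int p) y)" using g1 g2 g3 D_def by (simp add: dist_commute)
      thus "case (s, p) of (s, p) \<Rightarrow> R \<le> gprod w (c s) (ipow \<gamma> (int p) y)" by simp
    qed
  qed
  have bot: "same_ideal_limit c at_bot (\<lambda>p. ipow \<gamma> (- int p) y) sequentially" for y
    unfolding same_ideal_limit_def
  proof (intro allI)
    fix w R
    define D where "D = dist w x + dist x y"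
    define S where "S = max 0 (R + D + rr + \<delta>)"
    obtain N where N: "R + D + 3/2*\<delta> + \<delta> \<le> real N * kap" using Nex by blast
    show "\<forall>\<^sub>F (s, p) in at_bot \<times>\<^sub>F sequentially. R \<le> gprod w (c s) (ipow \<gamma> (- int p) y)"
      unfolding eventually_prod_filter
    proof (intro exI conjI allI impI)
      show "eventually (\<lambda>s. s \<le> - S) at_bot" by simp
      show "eventually (\<lambda>p. N \<le> p) sequentially" by simp
      fix s p assume s: "s \<le> - S" and p: "N \<le> p"
      have "real N * kap \<le> real p * kap" using p kap_pos by simp
      hence dp: "dist x (X (- int p)) \<ge> R + D + 3/2*\<delta> + \<delta>" using growth_neg[of p] N kap_def by simp
      have g0: "gprod x (c s) (X (- int p)) \<ge> min (- s - rr) (dist x (X (- int p)) - 3/2*\<delta>) - \<delta>"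
        using bwd s S_def by simp
      have g1: "gprod x (c s) (ipow \<gamma> (- int p) y) \<le> gprod w (c s) (ipow \<gamma> (- int p) y) + dist x w"
        by (rule gprod_lip1)
      have g2: "gprod x (c s) (X (- int p)) \<le> gprod x (c s) (ipow \<gamma> (- int p) y) + dist (X (- int p)) (ipow \<gamma> (- int p) y)"
        by (rule gprod_lip3)
      have g3: "dist (X (- int p)) (ipow \<gamma> (- int p) y) = dist x y" unfolding X_def by (rule ipow_dist[OF iso])
      have "min (- s - rr) (dist x (X (- int p)) - 3/2*\<delta>) \<ge> R + D + \<delta>" using dp s S_def by auto
      hence "gprod x (c s) (X (- int p)) \<ge> R + D" using g0 by linarith
      hence "R \<le> gprod w (c s) (ipow \<gamma> (- int p) y)" using g1 g2 g3 D_def by (simp add: dist_commute)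
      thus "case (s, p) of (s, p) \<Rightarrow> R \<le> gprod w (c s) (ipow \<gamma> (- int p) y)" by simp
    qed
  qed
  show ?thesis using c top bot unfolding goodline_def by blast
qed

lemma part_i: "infdist x (Mset \<gamma>) \<le> 7/2*\<delta>"
proof -
  obtain c where c: "goodline \<gamma> c" "dist x (c 0) \<le> rr" using good_exists by blast
  have "infdist x (Mset \<gamma>) \<le> dist x (c 0)" by (rule infdist_le[OF goodline_in[OF c(1)]])
  thus ?thesis using c(2) rr_def dnn by simp
qed

lemma near_line:
  assumes g: "goodline \<gamma> c"
  shows "\<exists>\<tau>. dist x (c \<tau>) \<le> 9/2*\<delta>"
proof -
  define R where "R = 3/2*\<delta> + 2*\<delta> + 1"
  have top: "\<forall>\<^sub>F (s, p) in at_top \<times>\<^sub>F sequentially. R \<le> gprod x (c s) (ipow \<gamma> (int p) x)"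
    using g unfolding goodline_def same_ideal_limit_def by blast
  then obtain Pf Pg where Pf: "eventually Pf at_top" and Pg: "eventually Pg sequentially"
    and PP: "\<forall>s p. Pf s \<longrightarrow> Pg p \<longrightarrow> R \<le> gprod x (c s) (ipow \<gamma> (int p) x)"
    unfolding eventually_prod_filter by auto
  obtain S0 where S0: "\<forall>s\<ge>S0. Pf s" using Pf unfolding eventually_at_top_linorder by blast
  obtain N0 where N0: "\<forall>p\<ge>N0. Pg p" using Pg unfolding eventually_sequentially by blast
  have bot: "\<forall>\<^sub>F (s, p) in at_bot \<times>\<^sub>F sequentially. R \<le> gprod x (c s) (ipow \<gamma> (- int p) x)"
    using g unfolding goodline_def same_ideal_limit_def by blast
  then obtain Pf' Pg' where Pf': "eventually Pf' at_bot" and Pg': "eventually Pg' sequentially"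
    and PP': "\<forall>s p. Pf' s \<longrightarrow> Pg' p \<longrightarrow> R \<le> gprod x (c s) (ipow \<gamma> (- int p) x)"
    unfolding eventually_prod_filter by auto
  obtain S1 where S1: "\<forall>s\<le>S1. Pf' s" using Pf' unfolding eventually_at_bot_linorder by blast
  obtain N1 where N1: "\<forall>p\<ge>N1. Pg' p" using Pg' unfolding eventually_sequentially by blast
  define T where "T = max 0 (max S0 (- S1))"
  define n where "n = max N0 N1"
  have a1: "R \<le> gprod x (c T) (X (int n))" using PP S0 N0 unfolding T_def n_def X_def by auto
  have a2: "R \<le> gprod x (c (- T)) (X (- int n))" using PP' S1 N1 unfolding T_def n_def X_def by auto
  have ch: "gprod x (X (- int n)) (X (int n)) \<le> 3/2*\<delta>" by (rule chain0)
  define G where "G = gprod x (c (- T)) (c T)"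
  have G: "G \<le> 3/2*\<delta> + 2*\<delta>"
  proof (rule ccontr)
    assume "\<not> ?thesis"
    hence Gb: "G > 3/2*\<delta> + 2*\<delta>" by simp
    have f1: "gprod x (c (- T)) (X (int n)) \<ge> min (gprod x (c (- T)) (c T)) (gprod x (c T) (X (int n))) - \<delta>"
      by (rule four_point[OF hyp])
    have f2: "gprod x (X (- int n)) (X (int n)) \<ge> min (gprod x (X (- int n)) (c (- T))) (gprod x (c (- T)) (X (int n))) - \<delta>"
      by (rule four_point[OF hyp])
    have "gprod x (X (- int n)) (c (- T)) = gprod x (c (- T)) (X (- int n))" by (rule gprod_sym)
    have "3/2*\<delta> + 2*\<delta> < min (gprod x (c (- T)) (c T)) (gprod x (c T) (X (int n)))"
      using Gb a1 G_def R_def by simp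
    hence h1: "gprod x (c (- T)) (X (int n)) > 3/2*\<delta> + \<delta>" using f1 by linarith
    have "3/2*\<delta> + \<delta> < min (gprod x (X (- int n)) (c (- T))) (gprod x (c (- T)) (X (int n)))"
      using h1 a2 R_def dnn \<open>gprod x (X (- int n)) (c (- T)) = gprod x (c (- T)) (X (- int n))\<close>
      by simp
    hence "gprod x (X (- int n)) (X (int n)) > 3/2*\<delta>" using f2 by linarith
    thus False using ch by simp
  qed
  have T0: "- T \<le> T" using T_def by simp
  have gl: "geod_line c" using g unfolding goodline_def by simp
  have seg: "geod_seg (\<lambda>v. c (- T + v)) (c (- T)) (c T)" by (rule geod_line_seg[OF gl T0])
  have "dist x ((\<lambda>v. c (- T + v)) (gprod (c (- T)) x (c T))) \<le> gprod x (c (- T)) (c T) + \<delta>"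
    by (rule dist_side[OF hyp seg])
  thus ?thesis using G G_def by (intro exI[of _ "- T + gprod (c (- T)) x (c T)"]) simp
qed

end



lemma Mmin_ipow:
  assumes iso: "isometry \<gamma>" and z: "z \<in> Mmin \<gamma>"
  shows "ipow \<gamma> k z \<in> Mmin \<gamma>"
proof -
  have "dist (ipow \<gamma> k z) (\<gamma> (ipow \<gamma> k z)) = dist (ipow \<gamma> k z) (ipow \<gamma> k (\<gamma> z))"
    by (simp add: ipow_comm[OF iso])
  also have "\<dots> = dist z (\<gamma> z)" by (rule ipow_dist[OF iso])
  finally show ?thesis using z unfolding Mmin_def by simp
qed

lemma seg_Mmin:
  assumes iso: "isometry \<gamma>" and z: "z \<in> Mmin \<gamma>" and \<sigma>: "geod_seg \<sigma> z (\<gamma> z)"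
    and u: "0 \<le> u" "u \<le> dist z (\<gamma> z)"
  shows "\<sigma> u \<in> Mmin \<gamma>"
proof -
  have "dist (\<sigma> u) (\<gamma> (\<sigma> u)) \<le> dist (\<sigma> u) (\<gamma> z) + dist (\<gamma> z) (\<gamma> (\<sigma> u))" by (rule dist_triangle)
  also have "dist (\<gamma> z) (\<gamma> (\<sigma> u)) = dist z (\<sigma> u)" by (rule isom_dist[OF iso])
  also have "dist z (\<sigma> u) = u" by (rule geod_seg_dist1[OF \<sigma> u])
  also have "dist (\<sigma> u) (\<gamma> z) = dist z (\<gamma> z) - u" by (rule geod_seg_dist2[OF \<sigma> u])
  finally have "dist (\<sigma> u) (\<gamma> (\<sigma> u)) \<le> min_disp \<gamma>" using z unfolding Mmin_def by simp
  moreover have "min_disp \<gamma> \<le> dist (\<sigma> u) (\<gamma> (\<sigma> u))" by (rule min_disp_le[OF iso])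
  ultimately show ?thesis unfolding Mmin_def by simp
qed

lemma discrete_ivt:
  fixes f :: "int \<Rightarrow> real"
  shows "f a \<le> 0 \<Longrightarrow> 0 \<le> f (a + int (Suc n)) \<Longrightarrow> \<exists>k. f k \<le> 0 \<and> 0 \<le> f (k+1)"
proof (induction n arbitrary: a)
  case 0 thus ?case by auto
next
  case (Suc n)
  show ?case
  proof (cases "0 \<le> f (a+1)")
    case True thus ?thesis using Suc by auto
  next
    case False
    have "0 \<le> f ((a+1) + int (Suc n))" using Suc.prems(2) by (simp add: algebra_simps)
    thus ?thesis using Suc.IH[of "a+1"] False by auto
  qed
qed

locale sweep =
  fixes \<delta> :: real and \<gamma> :: "'a::metric_space \<Rightarrow> 'a" and c :: "real \<Rightarrow> 'a" and w :: 'a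
  assumes hyp: "delta_hyperbolic TYPE('a) \<delta>"
    and iso: "isometry \<gamma>"
    and big: "min_disp \<gamma> > 3 * \<delta>"
    and good: "goodline \<gamma> c"
    and wmin: "w \<in> Mmin \<gamma>"
begin

lemma gl: "geod_line c" using good unfolding goodline_def by simp

lemma near: "z \<in> Mmin \<gamma> \<Longrightarrow> \<exists>\<tau>. dist z (c \<tau>) \<le> 9/2*\<delta>"
proof -
  assume z: "z \<in> Mmin \<gamma>"
  interpret mpt \<delta> \<gamma> z using hyp iso z big by unfold_locales
  show ?thesis by (rule near_line[OF good])
qed

lemma gp0: "\<tau> \<le> t \<Longrightarrow> t \<le> s \<Longrightarrow> gprod (c t) (c s) (c \<tau>) = 0"
  using gl unfolding geod_line_def gprod_def by simp

lemma gp0': "s \<le> t \<Longrightarrow> t \<le> \<tau> \<Longrightarrow> gprod (c t) (c s) (c \<tau>) = 0"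
  using gl unfolding geod_line_def gprod_def by simp

definition W where "W k = ipow \<gamma> k w"

lemma W_Mmin: "W k \<in> Mmin \<gamma>" unfolding W_def by (rule Mmin_ipow[OF iso wmin])

lemma sweep_bound: "infdist (c t) (Mmin \<gamma>) \<le> 11/2*\<delta>"
proof -
  define D where "D = 9/2*\<delta>"
  define Lh where "Lh = c ` {..t}"
  define Rh where "Rh = c ` {t..}"
  define \<phi> where "\<phi> z = infdist z Lh - infdist z Rh" for z
  have Lne: "Lh \<noteq> {}" and Rne: "Rh \<noteq> {}" unfolding Lh_def Rh_def by auto
  have nearD: "\<exists>\<tau>. dist z (c \<tau>) \<le> D" if "z \<in> Mmin \<gamma>" for z using near[OF that] unfolding D_def .
  have a: "\<exists>p::nat. infdist (W (int p)) Lh > D"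
  proof (rule ccontr)
    assume "\<not> ?thesis"
    hence A: "\<forall>p::nat. infdist (W (int p)) Lh \<le> D" by (simp add: not_less)
    have "\<forall>\<^sub>F (s, p) in at_top \<times>\<^sub>F sequentially. D + 2 \<le> gprod (c t) (c s) (ipow \<gamma> (int p) w)"
      using good unfolding goodline_def same_ideal_limit_def by blast
    then obtain Pf Pg where Pf: "eventually Pf at_top" and Pg: "eventually Pg sequentially"
      and PP: "\<forall>s p. Pf s \<longrightarrow> Pg p \<longrightarrow> D + 2 \<le> gprod (c t) (c s) (ipow \<gamma> (int p) w)"
      unfolding eventually_prod_filter by auto
    obtain S0 where S0: "\<forall>s\<ge>S0. Pf s" using Pf unfolding eventually_at_top_linorder by blast
    obtain N0 where N0: "\<forall>p\<ge>N0. Pg p" using Pg unfolding eventually_sequentially by blast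
    define s where "s = max S0 t"
    have g: "D + 2 \<le> gprod (c t) (c s) (W (int N0))" using PP S0 N0 unfolding s_def W_def by auto
    have "infdist (W (int N0)) Lh \<le> D" using A by blast
    hence "infdist (W (int N0)) Lh < D + 1" by simp
    then obtain y where y: "y \<in> Lh" "dist (W (int N0)) y < D + 1" using infdist_lessD[OF _ Lne] by blast
    then obtain \<tau> where \<tau>: "\<tau> \<le> t" "y = c \<tau>" unfolding Lh_def by auto
    have "gprod (c t) (c s) (W (int N0)) \<le> gprod (c t) (c s) (c \<tau>) + dist (W (int N0)) (c \<tau>)"
      by (rule gprod_lip3)
    moreover have "gprod (c t) (c s) (c \<tau>) = 0" using gp0 \<tau> s_def by simp
    ultimately show False using g y \<tau> by simp
  qed
  have b: "\<exists>p::nat. infdist (W (- int p)) Rh > D"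
  proof (rule ccontr)
    assume "\<not> ?thesis"
    hence A: "\<forall>p::nat. infdist (W (- int p)) Rh \<le> D" by (simp add: not_less)
    have "\<forall>\<^sub>F (s, p) in at_bot \<times>\<^sub>F sequentially. D + 2 \<le> gprod (c t) (c s) (ipow \<gamma> (- int p) w)"
      using good unfolding goodline_def same_ideal_limit_def by blast
    then obtain Pf Pg where Pf: "eventually Pf at_bot" and Pg: "eventually Pg sequentially"
      and PP: "\<forall>s p. Pf s \<longrightarrow> Pg p \<longrightarrow> D + 2 \<le> gprod (c t) (c s) (ipow \<gamma> (- int p) w)"
      unfolding eventually_prod_filter by auto
    obtain S0 where S0: "\<forall>s\<le>S0. Pf s" using Pf unfolding eventually_at_bot_linorder by blast
    obtain N0 where N0: "\<forall>p\<ge>N0. Pg p" using Pg unfolding eventually_sequentially by blast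
    define s where "s = min S0 t"
    have g: "D + 2 \<le> gprod (c t) (c s) (W (- int N0))" using PP S0 N0 unfolding s_def W_def by auto
    have "infdist (W (- int N0)) Rh \<le> D" using A by blast
    hence "infdist (W (- int N0)) Rh < D + 1" by simp
    then obtain y where y: "y \<in> Rh" "dist (W (- int N0)) y < D + 1" using infdist_lessD[OF _ Rne] by blast
    then obtain \<tau> where \<tau>: "t \<le> \<tau>" "y = c \<tau>" unfolding Rh_def by auto
    have "gprod (c t) (c s) (W (- int N0)) \<le> gprod (c t) (c s) (c \<tau>) + dist (W (- int N0)) (c \<tau>)"
      by (rule gprod_lip3)
    moreover have "gprod (c t) (c s) (c \<tau>) = 0" using gp0' \<tau> s_def by simp
    ultimately show False using g y \<tau> by simp
  qed
  have pos: "\<phi> z > 0" if z: "z \<in> Mmin \<gamma>" "infdist z Lh > D" for z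
  proof -
    obtain \<tau> where \<tau>: "dist z (c \<tau>) \<le> D" using nearD z by blast
    show ?thesis
    proof (cases "\<tau> \<le> t")
      case True
      hence "infdist z Lh \<le> dist z (c \<tau>)" unfolding Lh_def by (intro infdist_le) auto
      thus ?thesis using \<tau> z by simp
    next
      case False
      hence "infdist z Rh \<le> dist z (c \<tau>)" unfolding Rh_def by (intro infdist_le) auto
      thus ?thesis using \<tau> z \<phi>_def by simp
    qed
  qed
  have neg: "\<phi> z < 0" if z: "z \<in> Mmin \<gamma>" "infdist z Rh > D" for z
  proof -
    obtain \<tau> where \<tau>: "dist z (c \<tau>) \<le> D" using nearD z by blast
    show ?thesis
    proof (cases "\<tau> \<le> t")
      case True
      hence "infdist z Lh \<le> dist z (c \<tau>)" unfolding Lh_def by (intro infdist_le) auto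
      thus ?thesis using \<tau> z \<phi>_def by simp
    next
      case False
      hence "infdist z Rh \<le> dist z (c \<tau>)" unfolding Rh_def by (intro infdist_le) auto
      thus ?thesis using \<tau> z by simp
    qed
  qed
  obtain p1 :: nat where p1: "infdist (W (int p1)) Lh > D" using a by blast
  obtain p2 :: nat where p2: "infdist (W (- int p2)) Rh > D" using b by blast
  have f1: "\<phi> (W (int p1)) > 0" using pos[OF W_Mmin p1] .
  have f2: "\<phi> (W (- int p2)) < 0" using neg[OF W_Mmin p2] .
  have ne: "- int p2 \<noteq> int p1"
  proof
    assume "- int p2 = int p1"
    hence "W (- int p2) = W (int p1)" by simp
    thus False using f1 f2 by simp
  qed
  define n where "n = nat (int p1 + int p2) - 1"
  have "int p1 = - int p2 + int (Suc n)" using ne unfolding n_def by auto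
  hence "0 \<le> \<phi> (W (- int p2 + int (Suc n)))" using f1 by simp
  then obtain k where k: "\<phi> (W k) \<le> 0" "0 \<le> \<phi> (W (k+1))"
    using discrete_ivt[of "\<lambda>k. \<phi> (W k)" "- int p2" n] f2 by auto
  obtain \<sigma> where \<sigma>: "geod_seg \<sigma> (W k) (\<gamma> (W k))" using geod_exists[OF hyp] by blast
  define s' where "s' = dist (W k) (\<gamma> (W k))"
  have Wk1: "W (k+1) = \<gamma> (W k)" unfolding W_def by (rule ipow_succ[OF iso])
  have cont: "continuous_on {0..s'} (\<lambda>u. \<phi> (\<sigma> u))"
    unfolding continuous_on_iff
  proof (intro ballI allI impI)
    fix u e assume u: "u \<in> {0..s'}" and e: "(0::real) < e"
    show "\<exists>d>0. \<forall>v\<in>{0..s'}. dist v u < d \<longrightarrow> dist (\<phi> (\<sigma> v)) (\<phi> (\<sigma> u)) < e"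
    proof (intro exI[of _ "e/2"] conjI ballI impI)
      show "0 < e/2" using e by simp
      fix v assume v: "v \<in> {0..s'}" and dv: "dist v u < e/2"
      have ds: "dist (\<sigma> v) (\<sigma> u) = \<bar>v - u\<bar>" using geod_seg_dist[OF \<sigma>] u v s'_def by auto
      have "\<bar>infdist (\<sigma> v) Lh - infdist (\<sigma> u) Lh\<bar> \<le> dist (\<sigma> v) (\<sigma> u)" by (rule infdist_triangle_abs)
      moreover have "\<bar>infdist (\<sigma> v) Rh - infdist (\<sigma> u) Rh\<bar> \<le> dist (\<sigma> v) (\<sigma> u)" by (rule infdist_triangle_abs)
      ultimately show "dist (\<phi> (\<sigma> v)) (\<phi> (\<sigma> u)) < e"
        using ds dv unfolding \<phi>_def dist_real_def by linarith
    qed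
  qed
  have s'0: "0 \<le> s'" unfolding s'_def by simp
  have g0: "\<phi> (\<sigma> 0) \<le> 0" using k \<sigma> unfolding geod_seg_def by simp
  have g1: "0 \<le> \<phi> (\<sigma> s')" using k \<sigma> Wk1 unfolding geod_seg_def s'_def by simp
  obtain u where u: "0 \<le> u" "u \<le> s'" "\<phi> (\<sigma> u) = 0" using IVT'[OF g0 g1 s'0 cont] by blast
  define z where "z = \<sigma> u"
  have zM: "z \<in> Mmin \<gamma>" unfolding z_def using seg_Mmin[OF iso W_Mmin \<sigma>] u s'_def by simp
  define \<rho> where "\<rho> = infdist z Lh"
  have \<rho>R: "infdist z Rh = \<rho>" using u z_def \<rho>_def \<phi>_def by simp
  have \<rho>D: "\<rho> \<le> D"
  proof -
    obtain \<tau> where \<tau>: "dist z (c \<tau>) \<le> D" using nearD zM by blast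
    show ?thesis
    proof (cases "\<tau> \<le> t")
      case True
      hence "infdist z Lh \<le> dist z (c \<tau>)" unfolding Lh_def by (intro infdist_le) auto
      thus ?thesis using \<tau> \<rho>_def by simp
    next
      case False
      hence "infdist z Rh \<le> dist z (c \<tau>)" unfolding Rh_def by (intro infdist_le) auto
      thus ?thesis using \<tau> \<rho>R by simp
    qed
  qed
  have "infdist (c t) (Mmin \<gamma>) \<le> D + \<delta>"
  proof (rule field_le_epsilon)
    fix e :: real assume e: "0 < e"
    obtain y1 where y1: "y1 \<in> Lh" "dist z y1 < \<rho> + e" using infdist_lessD[OF _ Lne, of z "\<rho> + e"] e \<rho>_def by auto
    obtain y2 where y2: "y2 \<in> Rh" "dist z y2 < \<rho> + e" using infdist_lessD[OF _ Rne, of z "\<rho> + e"] e \<rho>R by auto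
    obtain a where a: "a \<le> t" "y1 = c a" using y1 unfolding Lh_def by auto
    obtain b where b: "t \<le> b" "y2 = c b" using y2 unfolding Rh_def by auto
    have ab: "a \<le> b" using a b by simp
    have seg: "geod_seg (\<lambda>v. c (a + v)) (c a) (c b)" by (rule geod_line_seg[OF gl ab])
    have dab: "dist (c a) (c b) = b - a" using gl ab unfolding geod_line_def by simp
    have "dist ((\<lambda>v. c (a + v)) (t - a)) z \<le> max (dist (c a) z) (dist (c b) z) + \<delta>"
      by (rule tripod_point[OF hyp seg]) (use a b dab in auto)
    hence "dist (c t) z \<le> max (dist (c a) z) (dist (c b) z) + \<delta>" by simp
    moreover have "max (dist (c a) z) (dist (c b) z) < \<rho> + e" using y1 y2 a b by (simp add: dist_commute)
    ultimately have "dist (c t) z < \<rho> + e + \<delta>" by linarith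
    moreover have "infdist (c t) (Mmin \<gamma>) \<le> dist (c t) z" by (rule infdist_le[OF zM])
    ultimately show "infdist (c t) (Mmin \<gamma>) \<le> D + \<delta> + e" using \<rho>D by simp
  qed
  thus ?thesis using D_def by simp
qed

end

theorem mainTheorem5:
  fixes \<delta> :: real and \<gamma> :: "'a::metric_space \<Rightarrow> 'a"
  assumes "delta_hyperbolic TYPE('a) \<delta>"
    and "hyperbolic_isometry \<gamma>"
    and "asymp_disp \<gamma> > 3 * \<delta>"
  shows "(\<forall>x\<in>Mmin \<gamma>. infdist x (Mset \<gamma>) \<le> 7/2 * \<delta>) \<and>
         (\<forall>x\<in>Mset \<gamma>. infdist x (Mmin \<gamma>) \<le> 15/2 * \<delta>)"
proof -
  have hyp: "delta_hyperbolic TYPE('a) \<delta>" by fact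
  have iso: "isometry \<gamma>" using assms(2) unfolding hyperbolic_isometry_def by simp
  have big: "min_disp \<gamma> > 3 * \<delta>" using asymp_le_min[OF iso] assms(3) by simp
  have dnn: "0 \<le> \<delta>" by (rule delta_nonneg[OF hyp])
  have i: "infdist x (Mset \<gamma>) \<le> 7/2 * \<delta>" if x: "x \<in> Mmin \<gamma>" for x
  proof -
    interpret mpt \<delta> \<gamma> x using hyp iso x big by unfold_locales
    show ?thesis by (rule part_i)
  qed
  have ii: "infdist y (Mmin \<gamma>) \<le> 15/2 * \<delta>" if y: "y \<in> Mset \<gamma>" for y
  proof (cases "Mmin \<gamma> = {}")
    case True thus ?thesis using dnn by (simp add: infdist_def)
  next
    case False
    then obtain w where w: "w \<in> Mmin \<gamma>" by blast
    obtain c t where c: "goodline \<gamma> c" "y = c t" using Mset_elim[OF y] by blast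
    interpret sweep \<delta> \<gamma> c w using hyp iso big c(1) w by unfold_locales
    show ?thesis using sweep_bound[of t] c(2) dnn by simp
  qed
  show ?thesis using i ii by blast
qed

end
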